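(* Let $d\ge1$, $x_1<x_2$, $x_0\in[x_1,x_2]$, let $p,r_1,\dots,r_d$ be functions on $[x_1,x_2]$ and $u_0$ a nonvanishing function on $[x_1,x_2]$ such that $M_0=\sup_{[x_1,x_2]}\frac{1}{|pu_0^2|}$ and $M_i=\sup_{[x_1,x_2]}|r_iu_0^2|$ ($i=1,\dots,d$) are finite. Then for every admissible $\mathbf j\in\mathbb Z_{\ge0}^d$ and every $x\in[x_1,x_2]$, $$|\tilde X^{(\mathbf j)}(x)|\le\tilde c_{\mathbf j}\,M_0^{\left[\frac{|\mathbf j|}{2}\right]}M_1^{\left[\frac{j_1+1}{2}\right]}M_2^{\left[\frac{j_2+1}{2}\right]}\cdots M_d^{\left[\frac{j_d+1}{2}\right]}\,|x-x_0|^{|\mathbf j|}.$$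
   Context: $[a]$ denotes the greatest integer not exceeding $a$. Notation: $\int f$ denotes $x\mapsto\int_{x_0}^x f(s)\,ds$; $|\mathbf j|=j_1+\cdots+j_d$; $\delta_i$ the $i$-th standard basis vector. A multiindex $\mathbf j\in\mathbb Z^d$ is admissible if at most one entry is odd. Formal powers: $\tilde X^{(\mathbf 0)}\equiv1$; $\tilde X^{(\mathbf j)}\equiv0$ if some $j_i<0$; for admissible $\mathbf j\ge0$, $\mathbf j\ne\mathbf 0$: if $|\mathbf j|$ is odd and $j_i$ is its odd entry, $\tilde X^{(\mathbf j)}=|\mathbf j|\int r_iu_0^2\tilde X^{(\mathbf j-\delta_i)}$; if $|\mathbf j|$ is even, $\tilde X^{(\mathbf j)}=|\mathbf j|\int\frac{1}{pu_0^2}\sum_{i=1}^d\tilde X^{(\mathbf j-\delta_i)}$. The integers $\tilde c_{\mathbf j}$ are defined by $\tilde c_{\mathbf 0}=1$, $\tilde c_{\mathbf j}=0$ if some $j_i<0$, and for admissible $\mathbf j\ge0$, $\mathbf j\neq\mathbf 0$: $\tilde c_{\mathbf j}=\tilde c_{\mathbf j-\delta_i}$ if $|\mathbf j|$ is odd with odd entry $j_i$, and $\tilde c_{\mathbf j}=\sum_{i=1}^d\tilde c_{\mathbf j-\delta_i}$ if $|\mathbf j|$ is even. *)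

theory Defs
  imports "HOL-Analysis.Analysis"
begin

text \<open>Multi-indices j in Z^d are int lists of length d (entries 0..d-1 stand for 1..d).
  The functions r_1..r_d are r 0 .. r (d-1).\<close>

definition oint :: "real \<Rightarrow> real \<Rightarrow> (real \<Rightarrow> real) \<Rightarrow> real" where
  "oint a b f = (if a \<le> b then integral {a..b} f else - integral {b..a} f)"

definition admissible :: "int list \<Rightarrow> bool" where
  "admissible j \<longleftrightarrow> card {i. i < length j \<and> odd (j ! i)} \<le> 1"

definition odd_entry :: "int list \<Rightarrow> nat" where
  "odd_entry j = (THE i. i < length j \<and> odd (j ! i))"

definition has_neg :: "int list \<Rightarrow> bool" where
  "has_neg j \<longleftrightarrow> (\<exists>i < length j. j ! i < 0)"

definition dec :: "int list \<Rightarrow> nat \<Rightarrow> int list" where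
  "dec j i = j[i := j ! i - 1]"

primrec Xrec :: "(real \<Rightarrow> real) \<Rightarrow> (nat \<Rightarrow> real \<Rightarrow> real) \<Rightarrow> (real \<Rightarrow> real) \<Rightarrow> real
    \<Rightarrow> nat \<Rightarrow> int list \<Rightarrow> real \<Rightarrow> real" where
  "Xrec p r u0 x0 0 j = (\<lambda>x. if j = replicate (length j) 0 then 1 else 0)"
| "Xrec p r u0 x0 (Suc n) j = (\<lambda>x.
     if has_neg j then 0
     else if odd (Suc n) then
       (let i = odd_entry j in
        real (Suc n) * oint x0 x (\<lambda>s. r i s * (u0 s)^2 * Xrec p r u0 x0 n (dec j i) s))
     else real (Suc n) * oint x0 x (\<lambda>s. 1 / (p s * (u0 s)^2) *
              (\<Sum>i<length j. Xrec p r u0 x0 n (dec j i) s)))"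

definition Xtilde :: "(real \<Rightarrow> real) \<Rightarrow> (nat \<Rightarrow> real \<Rightarrow> real) \<Rightarrow> (real \<Rightarrow> real) \<Rightarrow> real
    \<Rightarrow> int list \<Rightarrow> real \<Rightarrow> real" where
  "Xtilde p r u0 x0 j = (if has_neg j then (\<lambda>x. 0) else Xrec p r u0 x0 (nat (sum_list j)) j)"

primrec crec :: "nat \<Rightarrow> int list \<Rightarrow> nat" where
  "crec 0 j = (if j = replicate (length j) 0 then 1 else 0)"
| "crec (Suc n) j =
     (if has_neg j then 0
      else if odd (Suc n) then crec n (dec j (odd_entry j))
      else (\<Sum>i<length j. crec n (dec j i)))"

definition ctilde :: "int list \<Rightarrow> nat" where
  "ctilde j = (if has_neg j then 0 else crec (nat (sum_list j)) j)"

end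

theory Submission
  imports Defs
begin

lemma int_pow1:
  fixes a b :: real assumes "a \<le> b"
  shows "((\<lambda>s. (s-a)^n) has_integral (b-a)^(Suc n)/(Suc n)) {a..b}"
proof -
  define F where "F = (\<lambda>s::real. (s-a)^(Suc n)/(Suc n))"
  have "((\<lambda>s. (s-a)^n) has_integral (F b - F a)) {a..b}"
  proof (rule fundamental_theorem_of_calculus[OF assms])
    fix x assume "x \<in> {a..b}"
    have "(F has_real_derivative (real (Suc n) * (x-a)^n * 1)/(Suc n)) (at x within {a..b})"
      unfolding F_def by (intro derivative_eq_intros) auto
    then show "(F has_vector_derivative (x-a)^n) (at x within {a..b})"
      by (simp add: has_real_derivative_iff_has_vector_derivative)
  qed
  then show ?thesis by (simp add: F_def)
qed

lemma int_pow2: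
  fixes a b :: real assumes "a \<le> b"
  shows "((\<lambda>s. (b-s)^n) has_integral (b-a)^(Suc n)/(Suc n)) {a..b}"
proof -
  define F where "F = (\<lambda>s::real. - ((b-s)^(Suc n)/(Suc n)))"
  have "((\<lambda>s. (b-s)^n) has_integral (F b - F a)) {a..b}"
  proof (rule fundamental_theorem_of_calculus[OF assms])
    fix x assume "x \<in> {a..b}"
    have "(F has_real_derivative - ((real (Suc n) * (b-x)^n * (0-1))/(Suc n))) (at x within {a..b})"
      unfolding F_def by (intro derivative_eq_intros) auto
    then show "(F has_vector_derivative (b-x)^n) (at x within {a..b})"
      by (simp add: has_real_derivative_iff_has_vector_derivative)
  qed
  then show ?thesis by (simp add: F_def)
qed

lemma oint_bound:
  fixes f :: "real \<Rightarrow> real"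
  assumes K: "K \<ge> 0" and b: "\<forall>s\<in>{min x0 x..max x0 x}. \<bar>f s\<bar> \<le> K * \<bar>s - x0\<bar>^n"
  shows "\<bar>oint x0 x f\<bar> \<le> K * \<bar>x-x0\<bar>^(Suc n) / Suc n"
proof (cases "x0 \<le> x")
  case True
  have g: "((\<lambda>s. K * (s-x0)^n) has_integral K * ((x-x0)^(Suc n)/(Suc n))) {x0..x}"
    by (rule has_integral_mult_right[OF int_pow1[OF True]])
  show ?thesis
  proof (cases "f integrable_on {x0..x}")
    case True2: True
    have "norm (integral {x0..x} f) \<le> integral {x0..x} (\<lambda>s. K * (s-x0)^n)"
      apply (rule integral_norm_bound_integral[OF True2])
      using g b True by (auto simp: has_integral_integrable min_def max_def)
    moreover have "integral {x0..x} (\<lambda>s. K * (s-x0)^n) = K * ((x-x0)^(Suc n)/(Suc n))" using g by (rule integral_unique)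
    ultimately show ?thesis using True by (simp add: oint_def)
  next
    case False
    then show ?thesis using True K by (simp add: oint_def not_integrable_integral)
  qed
next
  case False
  hence F: "x \<le> x0" by simp
  have g: "((\<lambda>s. K * (x0-s)^n) has_integral K * ((x0-x)^(Suc n)/(Suc n))) {x..x0}"
    by (rule has_integral_mult_right[OF int_pow2[OF F]])
  show ?thesis
  proof (cases "f integrable_on {x..x0}")
    case True2: True
    have "norm (integral {x..x0} f) \<le> integral {x..x0} (\<lambda>s. K * (x0-s)^n)"
      apply (rule integral_norm_bound_integral[OF True2])
      using g b F by (auto simp: has_integral_integrable min_def max_def abs_minus_commute)
    moreover have "integral {x..x0} (\<lambda>s. K * (x0-s)^n) = K * ((x0-x)^(Suc n)/(Suc n))" using g by (rule integral_unique)
    ultimately show ?thesis using False F by (simp add: oint_def abs_minus_commute)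
  next
    case False2: False
    then show ?thesis using False F K by (simp add: oint_def not_integrable_integral)
  qed
qed

lemma hasneg_zero: "has_neg j \<Longrightarrow> Xrec p r u0 x0 n j x = 0 \<and> crec n j = 0"
  by (cases n) (auto simp: has_neg_def, metis nth_replicate less_irrefl)

lemma dec_nth: "i < length j \<Longrightarrow> k < length j \<Longrightarrow> dec j i ! k = (if k = i then j ! i - 1 else j ! k)"
  by (simp add: dec_def)

lemma dec_len[simp]: "length (dec j i) = length j"
  by (simp add: dec_def)

lemma dec_sum: "i < length j \<Longrightarrow> sum_list (dec j i) = sum_list j - 1"
  unfolding dec_def by (induction j arbitrary: i) (auto split: nat.split)

lemma sum_nth: "sum_list j = (\<Sum>i<length j. j ! i)"
  by (simp add: sum_list_sum_nth atLeast0LessThan)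

lemma adm_unique: "admissible j \<Longrightarrow> k < length j \<Longrightarrow> odd (j!k) \<Longrightarrow> m < length j \<Longrightarrow> odd (j!m) \<Longrightarrow> m = k"
  unfolding admissible_def
  by (subst (asm) One_nat_def, subst (asm) card_le_Suc0_iff_eq) auto

lemma odd_entry_eq: "admissible j \<Longrightarrow> k < length j \<Longrightarrow> odd (j!k) \<Longrightarrow> odd_entry j = k"
  unfolding odd_entry_def by (rule the_equality) (auto dest: adm_unique)

lemma even_sum_all: "(\<forall>i<length j. even (j!i)) \<Longrightarrow> even (sum_list j)"
  unfolding sum_nth by (rule dvd_sum) auto

lemma odd_sum_one: "admissible j \<Longrightarrow> k < length j \<Longrightarrow> odd (j!k) \<Longrightarrow> odd (sum_list j)"
proof -
  assume a: "admissible j" "k < length j" "odd (j!k)"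
  have e: "even (\<Sum>i\<in>{..<length j}-{k}. j!i)"
    by (rule dvd_sum) (use a adm_unique in blast)
  have "sum_list j = j!k + (\<Sum>i\<in>{..<length j}-{k}. j!i)"
    unfolding sum_nth using a(2) by (simp add: sum.remove)
  then show ?thesis using e a(3) by simp
qed

lemma main_ind:
  fixes p u0 :: "real \<Rightarrow> real" and r :: "nat \<Rightarrow> real \<Rightarrow> real" and M :: "nat \<Rightarrow> real"
  assumes x0: "x0 \<in> {x1..x2}"
    and B0: "\<forall>s\<in>{x1..x2}. 1 / \<bar>p s * (u0 s)^2\<bar> \<le> M0"
    and Bi: "\<forall>i<d. \<forall>s\<in>{x1..x2}. \<bar>r i s * (u0 s)^2\<bar> \<le> M i"
    and M0: "M0 \<ge> 0" and Mi: "\<forall>i<d. M i \<ge> 0"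
  shows "\<forall>j x. length j = d \<longrightarrow> (\<forall>i<d. j!i \<ge> 0) \<longrightarrow> admissible j \<longrightarrow> nat (sum_list j) = n
     \<longrightarrow> x \<in> {x1..x2} \<longrightarrow>
     \<bar>Xrec p r u0 x0 n j x\<bar> \<le> real (crec n j) * M0 ^ (n div 2)
       * (\<Prod>i<d. M i ^ nat ((j!i + 1) div 2)) * \<bar>x - x0\<bar> ^ n"
proof (induction n)
  case 0
  show ?case
  proof (intro allI impI)
    fix j :: "int list" and x
    assume a: "length j = d" "\<forall>i<d. j!i \<ge> 0" "admissible j" "nat (sum_list j) = 0" "x \<in> {x1..x2}"
    have "sum_list j \<le> 0" using a(4) by simp
    hence "(\<Sum>i<d. j!i) = 0" using a(1,2) sum_nonneg[of "{..<d}" "\<lambda>i. j!i"] by (simp add: sum_nth)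
    hence z: "\<forall>i<d. j!i = 0" using a(2) by (subst (asm) sum_nonneg_eq_0_iff) auto
    hence "j = replicate (length j) 0" using a(1) by (simp add: list_eq_iff_nth_eq)
    thus "\<bar>Xrec p r u0 x0 0 j x\<bar> \<le> real (crec 0 j) * M0 ^ (0 div 2)
       * (\<Prod>i<d. M i ^ nat ((j!i + 1) div 2)) * \<bar>x - x0\<bar> ^ 0"
      using z by simp
  qed
next
  case (Suc n)
  show ?case
  proof (intro allI impI)
    fix j :: "int list" and x
    assume a: "length j = d" "\<forall>i<d. j!i \<ge> 0" "admissible j" "nat (sum_list j) = Suc n" "x \<in> {x1..x2}"
    have nh: "\<not> has_neg j" using a(1,2) by (auto simp: has_neg_def)
    have S: "sum_list j = int (Suc n)" using a(4) by simp
    have seg: "{min x0 x..max x0 x} \<subseteq> {x1..x2}" using x0 a(5) by auto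
    define P where "P = (\<Prod>i<d. M i ^ nat ((j!i + 1) div 2))"
    have Pnn: "P \<ge> 0" unfolding P_def using Mi by (auto intro: prod_nonneg)
    show "\<bar>Xrec p r u0 x0 (Suc n) j x\<bar> \<le> real (crec (Suc n) j) * M0 ^ (Suc n div 2) * P * \<bar>x - x0\<bar> ^ Suc n"
    proof (cases "odd (Suc n)")
      case True
      obtain k where k: "k < d" "odd (j!k)"
        using even_sum_all[of j] S True a(1) by fastforce
      have oe: "odd_entry j = k" using odd_entry_eq[OF a(3)] k a(1) by simp
      define j' where "j' = dec j k"
      have j'n: "\<And>m. m < d \<Longrightarrow> j'!m = (if m = k then j!k - 1 else j!m)"
        unfolding j'_def using k a(1) by (simp add: dec_nth)
      have jk0: "j!k \<noteq> 0" using k(2) by auto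
      have jk1: "j!k \<ge> 1" using jk0 k a(1,2) by fastforce
      have ev': "\<forall>m<d. even (j'!m)"
      proof (intro allI impI)
        fix m assume m: "m < d"
        show "even (j'!m)"
        proof (cases "m = k")
          case True thus ?thesis using j'n[OF m] k(2) by simp
        next
          case False
          hence "\<not> odd (j!m)" using adm_unique[OF a(3), of k m] k a(1) m by auto
          thus ?thesis using j'n[OF m] False by simp
        qed
      qed
      have emp: "{i. i < length j' \<and> odd (j' ! i)} = {}" using ev' a(1) by (auto simp: j'_def)
      have adm': "admissible j'" unfolding admissible_def emp by simp
      have IH: "\<bar>Xrec p r u0 x0 n j' s\<bar> \<le> real (crec n j') * M0 ^ (n div 2)
       * (\<Prod>i<d. M i ^ nat ((j'!i + 1) div 2)) * \<bar>s - x0\<bar> ^ n" if "s \<in> {x1..x2}" for s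
        using Suc.IH[rule_format, of j' s] that a(1,2) adm' j'n jk1 dec_sum[of k j] k S
        by (auto simp: j'_def)
      define P' where "P' = (\<Prod>i<d. M i ^ nat ((j'!i + 1) div 2))"
      have P'nn: "P' \<ge> 0" unfolding P'_def using Mi by (auto intro: prod_nonneg)
      have PP: "P = M k * P'"
      proof -
        have "P = M k ^ nat ((j!k + 1) div 2) * (\<Prod>i\<in>{..<d}-{k}. M i ^ nat ((j!i + 1) div 2))"
          unfolding P_def using k by (simp add: prod.remove)
        moreover have "P' = M k ^ nat ((j'!k + 1) div 2) * (\<Prod>i\<in>{..<d}-{k}. M i ^ nat ((j'!i + 1) div 2))"
          unfolding P'_def using k by (simp add: prod.remove)
        moreover have "(\<Prod>i\<in>{..<d}-{k}. M i ^ nat ((j'!i + 1) div 2)) = (\<Prod>i\<in>{..<d}-{k}. M i ^ nat ((j!i + 1) div 2))"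
          using j'n by (intro prod.cong) auto
        moreover have "nat ((j!k + 1) div 2) = Suc (nat ((j'!k + 1) div 2))"
          using j'n[OF k(1)] k(2) jk1 by (auto elim!: oddE)
        ultimately show ?thesis by simp
      qed
      define K where "K = M k * (real (crec n j') * M0 ^ (n div 2) * P')"
      have Knn: "K \<ge> 0" unfolding K_def using Mi k M0 P'nn by simp
      have bd: "\<forall>s\<in>{min x0 x..max x0 x}. \<bar>r k s * (u0 s)^2 * Xrec p r u0 x0 n j' s\<bar> \<le> K * \<bar>s - x0\<bar>^n"
      proof
        fix s assume "s \<in> {min x0 x..max x0 x}"
        hence s: "s \<in> {x1..x2}" using seg by auto
        have "\<bar>r k s * (u0 s)^2 * Xrec p r u0 x0 n j' s\<bar> = \<bar>r k s * (u0 s)^2\<bar> * \<bar>Xrec p r u0 x0 n j' s\<bar>"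
          by (simp add: abs_mult)
        also have "\<dots> \<le> M k * (real (crec n j') * M0 ^ (n div 2) * P' * \<bar>s - x0\<bar> ^ n)"
          using IH[OF s] Bi Mi k s by (intro mult_mono) (auto simp: P'_def)
        finally show "\<bar>r k s * (u0 s)^2 * Xrec p r u0 x0 n j' s\<bar> \<le> K * \<bar>s - x0\<bar>^n"
          by (simp add: K_def mult.assoc)
      qed
      have X: "Xrec p r u0 x0 (Suc n) j x = real (Suc n) * oint x0 x (\<lambda>s. r k s * (u0 s)^2 * Xrec p r u0 x0 n j' s)"
        using nh True oe by (simp add: Let_def j'_def)
      have "\<bar>Xrec p r u0 x0 (Suc n) j x\<bar> \<le> real (Suc n) * (K * \<bar>x-x0\<bar>^(Suc n) / Suc n)"
        unfolding X abs_mult abs_of_nonneg[OF of_nat_0_le_iff] using oint_bound[OF Knn bd] by (intro mult_left_mono) auto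
      also have "\<dots> = K * \<bar>x-x0\<bar>^(Suc n)" by simp
      also have "\<dots> = real (crec (Suc n) j) * M0 ^ (Suc n div 2) * P * \<bar>x - x0\<bar> ^ Suc n"
        using nh True oe True by (simp add: K_def PP j'_def)
      finally show ?thesis .
    next
      case False
      have ev: "\<forall>m<d. even (j!m)"
        using odd_sum_one[OF a(3)] S False a(1) by fastforce
      have tm: "\<bar>Xrec p r u0 x0 n (dec j i) s\<bar> \<le> real (crec n (dec j i)) * (M0 ^ (n div 2) * P * \<bar>s - x0\<bar> ^ n)"
        if i: "i < d" and s: "s \<in> {x1..x2}" for i s
      proof (cases "j!i = 0")
        case True
        hence "has_neg (dec j i)" using i a(1) by (auto simp: has_neg_def dec_nth intro!: exI[of _ i])
        then show ?thesis using hasneg_zero by simp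
      next
        case False
        hence ji: "j!i \<ge> 1" using a(2) i by fastforce
        have dn: "\<And>m. m < d \<Longrightarrow> dec j i!m = (if m = i then j!i - 1 else j!m)"
          using i a(1) by (simp add: dec_nth)
        have adm': "admissible (dec j i)"
        proof -
          have "{m. m < length (dec j i) \<and> odd (dec j i ! m)} \<subseteq> {i}"
            using dn ev a(1) by (auto split: if_splits)
          hence "card {m. m < length (dec j i) \<and> odd (dec j i ! m)} \<le> card {i}"
            by (intro card_mono) auto
          thus ?thesis by (simp add: admissible_def)
        qed
        have pe: "(\<Prod>m<d. M m ^ nat ((dec j i!m + 1) div 2)) = P"
          unfolding P_def
        proof (intro prod.cong refl)
          fix m assume "m \<in> {..<d}"
          then show "M m ^ nat ((dec j i!m + 1) div 2) = M m ^ nat ((j!m + 1) div 2)"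
            using dn[of m] ev by (auto elim!: evenE)
        qed
        show ?thesis
          using Suc.IH[rule_format, of "dec j i" s] s a(1,2) adm' dn ji dec_sum[of i j] i S pe
          by (auto simp: mult.assoc)
      qed
      define C where "C = (\<Sum>i<d. real (crec n (dec j i)))"
      define K where "K = M0 * (C * (M0 ^ (n div 2) * P))"
      have Knn: "K \<ge> 0" unfolding K_def C_def using M0 Pnn by (simp add: sum_nonneg)
      have bd: "\<forall>s\<in>{min x0 x..max x0 x}. \<bar>1 / (p s * (u0 s)^2) * (\<Sum>i<length j. Xrec p r u0 x0 n (dec j i) s)\<bar> \<le> K * \<bar>s - x0\<bar>^n"
      proof
        fix s assume "s \<in> {min x0 x..max x0 x}"
        hence s: "s \<in> {x1..x2}" using seg by auto
        have "\<bar>\<Sum>i<length j. Xrec p r u0 x0 n (dec j i) s\<bar> \<le> (\<Sum>i<d. \<bar>Xrec p r u0 x0 n (dec j i) s\<bar>)"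
          using a(1) by (simp add: sum_abs)
        also have "\<dots> \<le> (\<Sum>i<d. real (crec n (dec j i)) * (M0 ^ (n div 2) * P * \<bar>s - x0\<bar> ^ n))"
          using tm s by (intro sum_mono) auto
        also have "\<dots> = C * (M0 ^ (n div 2) * P * \<bar>s - x0\<bar> ^ n)"
          by (simp add: C_def sum_distrib_right)
        finally have T: "\<bar>\<Sum>i<length j. Xrec p r u0 x0 n (dec j i) s\<bar> \<le> C * (M0 ^ (n div 2) * P * \<bar>s - x0\<bar> ^ n)" .
        have "\<bar>1 / (p s * (u0 s)^2) * (\<Sum>i<length j. Xrec p r u0 x0 n (dec j i) s)\<bar>
             = 1 / \<bar>p s * (u0 s)^2\<bar> * \<bar>\<Sum>i<length j. Xrec p r u0 x0 n (dec j i) s\<bar>"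
          by (simp add: abs_mult)
        also have "\<dots> \<le> M0 * (C * (M0 ^ (n div 2) * P * \<bar>s - x0\<bar> ^ n))"
          using B0 M0 s T by (intro mult_mono) auto
        finally show "\<bar>1 / (p s * (u0 s)^2) * (\<Sum>i<length j. Xrec p r u0 x0 n (dec j i) s)\<bar> \<le> K * \<bar>s - x0\<bar>^n"
          by (simp add: K_def mult.assoc)
      qed
      have X: "Xrec p r u0 x0 (Suc n) j x = real (Suc n) * oint x0 x (\<lambda>s. 1 / (p s * (u0 s)^2) * (\<Sum>i<length j. Xrec p r u0 x0 n (dec j i) s))"
        using nh False by simp
      have "\<bar>Xrec p r u0 x0 (Suc n) j x\<bar> \<le> real (Suc n) * (K * \<bar>x-x0\<bar>^(Suc n) / Suc n)"
        unfolding X abs_mult abs_of_nonneg[OF of_nat_0_le_iff] using oint_bound[OF Knn bd] by (intro mult_left_mono) auto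
      also have "\<dots> = K * \<bar>x-x0\<bar>^(Suc n)" by simp
      also have "\<dots> = real (crec (Suc n) j) * M0 ^ (Suc n div 2) * P * \<bar>x - x0\<bar> ^ Suc n"
      proof -
        have "Suc n div 2 = Suc (n div 2)" using False by presburger
        moreover have "real (crec (Suc n) j) = C" using nh False a(1) by (simp add: C_def)
        ultimately show ?thesis by (simp add: K_def)
      qed
      finally show ?thesis .
    qed
  qed
qed
theorem mainTheorem4:
  fixes d :: nat and x0 x1 x2 x :: real and p u0 :: "real \<Rightarrow> real"
    and r :: "nat \<Rightarrow> real \<Rightarrow> real" and j :: "int list"
  assumes "d \<ge> 1" and "x1 < x2" and "x0 \<in> {x1..x2}"
    and "\<forall>s\<in>{x1..x2}. u0 s \<noteq> 0"
    and "\<forall>s\<in>{x1..x2}. p s \<noteq> 0"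
    and "bdd_above ((\<lambda>s. 1 / \<bar>p s * (u0 s)^2\<bar>) ` {x1..x2})"
    and "\<forall>i<d. bdd_above ((\<lambda>s. \<bar>r i s * (u0 s)^2\<bar>) ` {x1..x2})"
    and "length j = d" and "\<forall>i<d. j ! i \<ge> 0" and "admissible j"
    and "x \<in> {x1..x2}"
  shows "\<bar>Xtilde p r u0 x0 j x\<bar> \<le>
    real (ctilde j)
    * (Sup ((\<lambda>s. 1 / \<bar>p s * (u0 s)^2\<bar>) ` {x1..x2})) ^ (nat (sum_list j) div 2)
    * (\<Prod>i<d. (Sup ((\<lambda>s. \<bar>r i s * (u0 s)^2\<bar>) ` {x1..x2})) ^ nat ((j ! i + 1) div 2))
    * \<bar>x - x0\<bar> ^ nat (sum_list j)"
  proof -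
  let ?S0 = "(\<lambda>s. 1 / \<bar>p s * (u0 s)^2\<bar>) ` {x1..x2}"
  define M0 where "M0 = Sup ?S0"
  define M where "M = (\<lambda>i. Sup ((\<lambda>s. \<bar>r i s * (u0 s)^2\<bar>) ` {x1..x2}))"
  have B0: "\<forall>s\<in>{x1..x2}. 1 / \<bar>p s * (u0 s)^2\<bar> \<le> M0"
    unfolding M0_def using assms(6) by (auto intro: cSup_upper)
  have Bi: "\<forall>i<d. \<forall>s\<in>{x1..x2}. \<bar>r i s * (u0 s)^2\<bar> \<le> M i"
    unfolding M_def using assms(7) by (auto intro: cSup_upper)
  have x1: "x1 \<in> {x1..x2}" using assms(2) by simp
  have M0: "M0 \<ge> 0" using B0 x1 by (meson abs_ge_zero order_trans zero_le_divide_1_iff)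
  have Mi: "\<forall>i<d. M i \<ge> 0" using Bi x1 by (meson abs_ge_zero order_trans)
  have nh: "\<not> has_neg j" using assms(8,9) by (auto simp: has_neg_def)
  have "\<bar>Xrec p r u0 x0 (nat (sum_list j)) j x\<bar> \<le> real (crec (nat (sum_list j)) j) * M0 ^ (nat (sum_list j) div 2)
       * (\<Prod>i<d. M i ^ nat ((j!i + 1) div 2)) * \<bar>x - x0\<bar> ^ nat (sum_list j)"
    using main_ind[OF assms(3) B0 Bi M0 Mi, of "nat (sum_list j)"] assms(8-11) by blast
  then show ?thesis using nh by (simp add: Xtilde_def ctilde_def M0_def M_def)
qed

end
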